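(* Let $E$ and $E'$ be strongly independent equations in the unknowns $x_1,\dots,x_n$. Then there exist $k,l\in\{1,\dots,n\}$ with $t_{kl}^{E,E'}\ne0$.
   Context: An equation is a pair $(u,v)$ of words over $\{x_1,\dots,x_n\}$; a solution is a morphism $h:\{x_1,\dots,x_n\}^*\to\{a_1,\dots,a_r\}^*$ with $h(u)=h(v)$; its rank is the dimension of the $\mathbb Q$-span of the vectors $(|h(x_1)|_{a_i},\dots,|h(x_n)|_{a_i})$. $E,E'$ are strongly independent if $E$ has a solution of rank $n-1$ not solving $E'$ and $E'$ has a solution of rank $n-1$ not solving $E$. For $E=(x_{i_1}\cdots x_{i_r},\,x_{j_1}\cdots x_{j_s})$, $S_{E,x_j}=\sum_{a:\,i_a=j}\prod_{t=1}^{a-1}X_{i_t}-\sum_{a:\,j_a=j}\prod_{t=1}^{a-1}X_{j_t}\in\mathbb Z[X_1,\dots,X_n]$ (empty product $=1$), and $t_{kl}^{E,E'}=S_{E,x_k}S_{E',x_l}-S_{E',x_k}S_{E,x_l}$. *)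

theory Defs
  imports "HOL-Library.Poly_Mapping" "Jordan_Normal_Form.DL_Rank"
begin

(* Unknowns x_1..x_n are represented by the naturals 1..n; a word over the unknowns
   is a nat list.  An equation is a pair (u,v) of such words. *)
type_synonym equation = "nat list \<times> nat list"

definition is_equation :: "nat \<Rightarrow> equation \<Rightarrow> bool" where
  "is_equation n E \<longleftrightarrow> set (fst E) \<subseteq> {1..n} \<and> set (snd E) \<subseteq> {1..n}"

(* A morphism h into {a_1,...,a_r}^*: letters a_1..a_r are represented by 0..r-1. *)
definition morph_app :: "(nat \<Rightarrow> nat list) \<Rightarrow> nat list \<Rightarrow> nat list" where
  "morph_app h w = concat (map h w)"

definition is_solution :: "nat \<Rightarrow> (nat \<Rightarrow> nat list) \<Rightarrow> equation \<Rightarrow> bool" where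
  "is_solution r h E \<longleftrightarrow> (\<forall>j. set (h j) \<subseteq> {0..<r}) \<and>
     morph_app h (fst E) = morph_app h (snd E)"

definition count_mat :: "nat \<Rightarrow> nat \<Rightarrow> (nat \<Rightarrow> nat list) \<Rightarrow> rat mat" where
  "count_mat n r h = mat n r (\<lambda>(j, i). of_nat (count_list (h (Suc j)) i))"

definition sol_rank :: "nat \<Rightarrow> nat \<Rightarrow> (nat \<Rightarrow> nat list) \<Rightarrow> nat" where
  "sol_rank n r h = vec_space.rank n (count_mat n r h)"

definition strongly_independent :: "nat \<Rightarrow> equation \<Rightarrow> equation \<Rightarrow> bool" where
  "strongly_independent n E E' \<longleftrightarrow>
     (\<exists>r h. is_solution r h E \<and> sol_rank n r h = n - 1 \<and> \<not> morph_app h (fst E') = morph_app h (snd E')) \<and>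
     (\<exists>r h. is_solution r h E' \<and> sol_rank n r h = n - 1 \<and> \<not> morph_app h (fst E) = morph_app h (snd E))"

(* Z[X_1,...,X_n] as finitely supported maps from monomials (exponent vectors) to int *)
type_synonym mpoly = "(nat \<Rightarrow>\<^sub>0 nat) \<Rightarrow>\<^sub>0 int"

definition Var :: "nat \<Rightarrow> mpoly" where
  "Var i = Poly_Mapping.single (Poly_Mapping.single i 1) 1"

definition Sw :: "nat list \<Rightarrow> nat \<Rightarrow> mpoly" where
  "Sw w j = (\<Sum>a \<in> {a. a < length w \<and> w ! a = j}. prod_list (map Var (take a w)))"

definition S :: "equation \<Rightarrow> nat \<Rightarrow> mpoly" where
  "S E j = Sw (fst E) j - Sw (snd E) j"

definition t_poly :: "equation \<Rightarrow> equation \<Rightarrow> nat \<Rightarrow> nat \<Rightarrow> mpoly" where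
  "t_poly E E' k l = S E k * S E' l - S E' k * S E l"

end

theory Submission imports Defs begin

definition phi :: "(nat \<Rightarrow> nat) \<Rightarrow> (nat \<Rightarrow>\<^sub>0 nat) \<Rightarrow> nat" where
  "phi l m = Sum_any (\<lambda>i. Poly_Mapping.lookup m i * l i)"

lemma phi_add: "phi l (m + m') = phi l m + phi l m'"
proof -
  have f1: "finite {i. Poly_Mapping.lookup m i * l i \<noteq> 0}"
    by (rule finite_subset[OF _ finite_lookup[of m]]) auto
  have f2: "finite {i. Poly_Mapping.lookup m' i * l i \<noteq> 0}"
    by (rule finite_subset[OF _ finite_lookup[of m']]) auto
  have eq: "(\<lambda>i. Poly_Mapping.lookup (m + m') i * l i) = (\<lambda>i. Poly_Mapping.lookup m i * l i + Poly_Mapping.lookup m' i * l i)"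
    by (simp add: lookup_add algebra_simps)
  show ?thesis unfolding phi_def eq by (rule Sum_any.distrib[OF f1 f2])
qed

lemma phi_zero[simp]: "phi l 0 = 0" by (simp add: phi_def)

lemma phi_single: "phi l (Poly_Mapping.single i 1) = l i"
proof -
  have eq: "(\<lambda>j. Poly_Mapping.lookup (Poly_Mapping.single i (1::nat)) j * l j) = (\<lambda>j. (l j when j = i))"
    by (auto simp: lookup_single when_def)
  show ?thesis unfolding phi_def eq by (rule Sum_any_when_equal)
qed

definition push :: "(nat \<Rightarrow> nat) \<Rightarrow> mpoly \<Rightarrow> (nat \<Rightarrow>\<^sub>0 int)" where
  "push l p = frag_extend (\<lambda>m. frag_of (phi l m)) p"

lemma push_add: "push l (p + q) = push l p + push l q"
  by (simp add: push_def frag_extend_add)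
lemma push_diff: "push l (p - q) = push l p - push l q"
  by (simp add: push_def frag_extend_diff)
lemma push_zero[simp]: "push l 0 = 0"
  by (simp add: push_def)
lemma push_frag_of[simp]: "push l (frag_of m) = frag_of (phi l m)"
  by (simp add: push_def)

lemma frag_of_mult: "frag_of (a::'a::monoid_add) * frag_of b = frag_of (a + b)"
  by (simp add: mult_single)

lemma push_mult1: "push l (frag_of x * q) = push l (frag_of x) * push l q"
proof (rule frag_induction[of q UNIV])
  show "push l (frag_of x * 0) = push l (frag_of x) * push l 0" by simp
next
  fix y show "push l (frag_of x * frag_of y) = push l (frag_of x) * push l (frag_of y)"
    by (simp only: frag_of_mult push_frag_of phi_add)
next
  fix a b assume "push l (frag_of x * a) = push l (frag_of x) * push l a"
    "push l (frag_of x * b) = push l (frag_of x) * push l b"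
  then show "push l (frag_of x * (a - b)) = push l (frag_of x) * push l (a - b)"
    by (simp add: right_diff_distrib push_diff)
qed simp

lemma push_mult: "push l (p * q) = push l p * push l q"
proof (rule frag_induction[of p UNIV])
  show "push l (0 * q) = push l 0 * push l q" by simp
next
  fix y show "push l (frag_of y * q) = push l (frag_of y) * push l q"
    by (rule push_mult1)
next
  fix a b assume "push l (a * q) = push l a * push l q"
    "push l (b * q) = push l b * push l q"
  then show "push l ((a - b) * q) = push l (a - b) * push l q"
    by (simp add: left_diff_distrib push_diff)
qed simp

lemma push_one[simp]: "push l 1 = 1"
proof -
  have "(1::mpoly) = frag_of 0" by simp
  then show ?thesis by (metis push_frag_of phi_zero single_one)
qed

lemma push_Var[simp]: "push l (Var i) = frag_of (l i)"
  unfolding Var_def push_frag_of phi_single by simp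

lemma push_sum: "finite A \<Longrightarrow> push l (sum f A) = (\<Sum>a\<in>A. push l (f a))"
  by (induction A rule: finite_induct) (simp_all add: push_add)

lemma push_prod_list: "push l (prod_list (map Var w)) = frag_of (sum_list (map l w))"
  by (induction w) (simp_all add: push_mult frag_of_mult)

lemma Sw_Cons: "Sw (c#w) j = (if c = j then 1 else 0) + Var c * Sw w j"
proof -
  let ?B = "{a. a < length w \<and> w ! a = j}"
  have A: "{a. a < length (c#w) \<and> (c#w) ! a = j} = {a. a = 0 \<and> c = j} \<union> Suc ` ?B"
  proof (rule Set.set_eqI)
    fix a show "a \<in> {a. a < length (c#w) \<and> (c#w) ! a = j} \<longleftrightarrow> a \<in> {a. a = 0 \<and> c = j} \<union> Suc ` ?B"
      by (cases a) (auto simp: image_iff)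
  qed
  have fin: "finite ?B" by simp
  have d: "{a. a = 0 \<and> c = j} \<inter> Suc ` ?B = {}" by auto
  have s1: "(\<Sum>a\<in>{a. a = 0 \<and> c = j}. prod_list (map Var (take a (c#w)))) = (if c = j then 1 else 0)"
    by (cases "c = j") auto
  have s2: "(\<Sum>a\<in>Suc ` ?B. prod_list (map Var (take a (c#w)))) = Var c * Sw w j"
    unfolding Sw_def by (simp add: sum.reindex sum_distrib_left)
  show ?thesis
    unfolding Sw_def[of "c#w"] A
    by (subst sum.union_disjoint) (use d s1 s2 in \<open>auto simp: Sw_def\<close>)
qed

lemma Sw_Nil[simp]: "Sw [] j = 0" by (simp add: Sw_def)

fun Fw :: "nat list \<Rightarrow> nat \<Rightarrow>\<^sub>0 int" where
  "Fw [] = 0"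
| "Fw (c#w) = Poly_Mapping.single 0 (int c + 1) + frag_of 1 * Fw w"

lemma Fw_append: "Fw (w1 @ w2) = Fw w1 + frag_of (length w1) * Fw w2"
proof (induction w1)
  case Nil then show ?case by simp
next
  case (Cons c w1)
  have "frag_of (1::nat) * (frag_of (length w1) * Fw w2) = frag_of (length (c#w1)) * Fw w2"
    by (simp add: mult.assoc[symmetric] frag_of_mult)
  then show ?case using Cons by (simp add: distrib_left add.assoc)
qed

lemma morph_app_Cons[simp]: "morph_app h (c#w) = h c @ morph_app h w"
  by (simp add: morph_app_def)
lemma morph_app_Nil[simp]: "morph_app h [] = []"
  by (simp add: morph_app_def)

lemma fox:
  assumes "finite J" "set w \<subseteq> J"
  shows "(\<Sum>j\<in>J. push (\<lambda>j. length (h j)) (Sw w j) * Fw (h j)) = Fw (morph_app h w)"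
  using assms(2)
proof (induction w)
  case Nil then show ?case by simp
next
  case (Cons c w)
  let ?l = "\<lambda>j. length (h j)"
  have "(\<Sum>j\<in>J. push ?l (Sw (c#w) j) * Fw (h j))
     = (\<Sum>j\<in>J. (if c = j then Fw (h j) else 0) + frag_of (?l c) * (push ?l (Sw w j) * Fw (h j)))"
    by (rule sum.cong) (auto simp: Sw_Cons push_add push_mult distrib_right mult.assoc)
  also have "\<dots> = Fw (h c) + frag_of (?l c) * (\<Sum>j\<in>J. push ?l (Sw w j) * Fw (h j))"
    using Cons.prems assms(1) by (simp add: sum.distrib sum_distrib_left)
  also have "\<dots> = Fw (morph_app h (c#w))"
    using Cons by (simp add: Fw_append)
  finally show ?case .
qed

lemma lookup_shift: "Poly_Mapping.lookup (frag_of k * (p :: nat \<Rightarrow>\<^sub>0 int)) a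
   = (if a < k then 0 else Poly_Mapping.lookup p (a - k))"
proof (rule frag_induction[of p UNIV])
  fix y show "Poly_Mapping.lookup (frag_of k * frag_of y) a = (if a < k then 0 else Poly_Mapping.lookup (frag_of y) (a - k))"
    by (simp add: frag_of_mult) linarith
next
  fix c d assume "Poly_Mapping.lookup (frag_of k * c) a = (if a < k then 0 else Poly_Mapping.lookup c (a - k))"
     "Poly_Mapping.lookup (frag_of k * d) a = (if a < k then 0 else Poly_Mapping.lookup d (a - k))"
  then show "Poly_Mapping.lookup (frag_of k * (c - d)) a = (if a < k then 0 else Poly_Mapping.lookup (c - d) (a - k))"
    by (simp add: right_diff_distrib lookup_minus)
qed simp_all

lemma lookup_Fw: "Poly_Mapping.lookup (Fw w) a = (if a < length w then int (w ! a) + 1 else 0)"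
proof (induction w arbitrary: a)
  case Nil then show ?case by simp
next
  case (Cons c w)
  then show ?case by (cases a) (simp_all add: lookup_add lookup_shift lookup_single)
qed

lemma Fw_inj: assumes "Fw w = Fw w'" shows "w = w'"
proof -
  have L: "\<And>a. Poly_Mapping.lookup (Fw w) a = Poly_Mapping.lookup (Fw w') a" using assms by simp
  have len: "length w = length w'"
  proof (rule ccontr)
    assume "length w \<noteq> length w'"
    then consider "length w < length w'" | "length w' < length w" by linarith
    then show False
    proof cases
      case 1 then show False using L[of "length w"] by (simp add: lookup_Fw)
    next
      case 2 then show False using L[of "length w'"] by (simp add: lookup_Fw)
    qed
  qed
  show ?thesis
  proof (rule nth_equalityI[OF len])
    fix i assume "i < length w"
    then show "w ! i = w' ! i" using L[of i] len by (simp add: lookup_Fw)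
  qed
qed

fun c0 :: "(nat \<Rightarrow> nat) \<Rightarrow> nat list \<Rightarrow> nat \<Rightarrow> nat" where
  "c0 l [] j = 0"
| "c0 l (c#w) j = (if c = j then 1 else 0) + (if l c = 0 then c0 l w j else 0)"

lemma lookup_push_Sw: "Poly_Mapping.lookup (push l (Sw w j)) 0 = int (c0 l w j)"
  by (induction w) (auto simp: Sw_Cons push_add push_mult lookup_add lookup_shift)

lemma push_Sw_Cons_diff: "push l (Sw (c#u) j - Sw (c#v) j) = frag_of (l c) * push l (Sw u j - Sw v j)"
  by (simp add: Sw_Cons push_diff push_mult push_add right_diff_distrib)

lemma c0_neq_push:
  assumes "c0 l a j \<noteq> c0 l b j"
  shows "push l (Sw a j - Sw b j) \<noteq> 0"
proof
  assume "push l (Sw a j - Sw b j) = 0"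
  then have "Poly_Mapping.lookup (push l (Sw a j - Sw b j)) 0 = 0" by simp
  then show False using assms by (simp add: push_diff lookup_minus lookup_push_Sw)
qed

lemma NV:
  assumes "u \<noteq> v" "morph_app h u = morph_app h v" "set u \<subseteq> {1..n}" "set v \<subseteq> {1..n}"
    "\<forall>k1\<in>{1..n}. \<forall>k2\<in>{1..n}. h k1 = [] \<longrightarrow> h k2 = [] \<longrightarrow> k1 = k2"
  shows "\<exists>j\<in>{1..n}. push (\<lambda>j. length (h j)) (Sw u j - Sw v j) \<noteq> 0"
  using assms
proof (induction u arbitrary: v)
  case Nil
  then obtain d v1 where v: "v = d # v1" by (cases v) auto
  then have "h d = []" using Nil.prems(2) by simp
  then have "c0 (\<lambda>j. length (h j)) [] d \<noteq> c0 (\<lambda>j. length (h j)) v d" using v by simp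
  then have "push (\<lambda>j. length (h j)) (Sw [] d - Sw v d) \<noteq> 0" by (rule c0_neq_push)
  moreover have "d \<in> {1..n}" using v Nil.prems(4) by simp
  ultimately show ?case by blast
next
  case (Cons c u)
  have c: "c \<in> {1..n}" using Cons.prems(3) by simp
  show ?case
  proof (cases v)
    case Nil
    then have "h c = []" using Cons.prems(2) by simp
    then have "c0 (\<lambda>j. length (h j)) (c#u) c \<noteq> c0 (\<lambda>j. length (h j)) v c" using Nil by simp
    then have "push (\<lambda>j. length (h j)) (Sw (c#u) c - Sw v c) \<noteq> 0" by (rule c0_neq_push)
    then show ?thesis using c by blast
  next
    case (Cons d v1)
    note v = this
    have d: "d \<in> {1..n}" using Cons.prems(4) v by simp
    show ?thesis
    proof (cases "c = d")
      case True
      have uv: "u \<noteq> v1" using Cons.prems(1) v True by simp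
      have m: "morph_app h u = morph_app h v1" using Cons.prems(2) v True by simp
      have su: "set u \<subseteq> {1..n}" using Cons.prems(3) by simp
      have sv: "set v1 \<subseteq> {1..n}" using Cons.prems(4) v by simp
      obtain j where j: "j \<in> {1..n}" "push (\<lambda>j. length (h j)) (Sw u j - Sw v1 j) \<noteq> 0"
        using Cons.IH[OF uv m su sv Cons.prems(5)] by blast
      have nz: "frag_of (length (h c)) \<noteq> (0 :: nat \<Rightarrow>\<^sub>0 int)" by simp
      have "push (\<lambda>j. length (h j)) (Sw (c#u) j - Sw (c#v1) j) \<noteq> 0"
        unfolding push_Sw_Cons_diff using nz j(2) by (simp only: mult_eq_0_iff) simp
      then show ?thesis using j(1) v True by blast
    next
      case False
      show ?thesis
      proof (cases "h d = []")
        case True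
        have "h c \<noteq> []"
        proof
          assume "h c = []"
          then have "c = d" using Cons.prems(5) c d True by blast
          then show False using False by simp
        qed
        then have "c0 (\<lambda>j. length (h j)) (c#u) d \<noteq> c0 (\<lambda>j. length (h j)) v d" using v False True by simp
        then have "push (\<lambda>j. length (h j)) (Sw (c#u) d - Sw v d) \<noteq> 0" by (rule c0_neq_push)
        then show ?thesis using d by blast
      next
        case nd: False
        then have "c0 (\<lambda>j. length (h j)) (c#u) c \<noteq> c0 (\<lambda>j. length (h j)) v c" using v False by simp
        then have "push (\<lambda>j. length (h j)) (Sw (c#u) c - Sw v c) \<noteq> 0" by (rule c0_neq_push)
        then show ?thesis using c by blast
      qed
    qed
  qed
qed

lemma (in vec_space) rank_two_zero_rows:
  assumes A: "A \<in> carrier_mat n nc" and k: "k1 < n" "k2 < n" "k1 \<noteq> k2"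
    and z: "\<And>c. c < nc \<Longrightarrow> A $$ (k1,c) = 0 \<and> A $$ (k2,c) = 0"
  shows "rank A + 2 \<le> n"
proof -
  obtain S where max: "maximal S (\<lambda>T. T \<subseteq> set (cols A) \<and> lin_indpt T)"
    using maximal_exists[of "(\<lambda>T. T \<subseteq> set (cols A) \<and> lin_indpt T)" "card (set (cols A))" "{}"]
    by (meson List.finite_set card_mono empty_iff empty_subsetI finite_lin_indpt2 rev_finite_subset)
  have rk: "rank A = card S" using rank_card_indpt[OF A max] .
  have SA: "S \<subseteq> set (cols A)" and li: "lin_indpt S" using max unfolding maximal_def by auto
  have finS: "finite S" using SA finite_subset by blast
  have Sc: "S \<subseteq> carrier_vec n" using SA cols_dim A by blast
  have Sz: "x $ k1 = 0 \<and> x $ k2 = 0" if "x \<in> S" for x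
  proof -
    have "x \<in> set (cols A)" using SA that by blast
    then obtain c where c0: "c < length (cols A)" "cols A ! c = x" by (auto simp: in_set_conv_nth)
    have c: "c < nc" "x = col A c" using c0 A by auto
    then show ?thesis using z[OF c(1)] k A by auto
  qed
  define e1 where "e1 = (unit_vec n k1 :: 'a vec)"
  define e2 where "e2 = (unit_vec n k2 :: 'a vec)"
  have e1k: "e1 $ k1 = 1" "e1 $ k2 = 0" using k unfolding e1_def by auto
  have e2k: "e2 $ k2 = 1" "e2 $ k1 = 0" using k unfolding e2_def by auto
  have e1S: "e1 \<notin> S" using Sz e1k by force
  have e2S: "e2 \<notin> S" using Sz e2k by force
  have e12: "e1 \<noteq> e2" using e1k e2k by force
  define T where "T = insert e1 (insert e2 S)"
  have finT: "finite T" using finS T_def by simp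
  have Tc: "T \<subseteq> carrier_vec n" using Sc k unfolding T_def e1_def e2_def by auto
  have cardT: "card T = card S + 2" using finS e1S e2S e12 unfolding T_def by simp
  have liT: "lin_indpt T"
  proof
    assume ld: "lin_dep T"
    obtain a w where a: "lincomb a T = 0\<^sub>v n" "w \<in> T" "a w \<noteq> 0"
      using finite_lin_dep[OF finT ld Tc] by blast
    have lc0: "lincomb a T = 0\<^sub>v n" using a(1) by simp
    have coord: "lincomb a T $ i = a e1 * e1 $ i + a e2 * e2 $ i + (\<Sum>x\<in>S. a x * x $ i)" if "i < n" for i
      using lincomb_index[OF that Tc] finS e1S e2S e12 unfolding T_def by (simp add: add.assoc)
    have sk1: "(\<Sum>x\<in>S. a x * x $ k1) = 0" by (rule sum.neutral) (simp add: Sz)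
    have sk2: "(\<Sum>x\<in>S. a x * x $ k2) = 0" by (rule sum.neutral) (simp add: Sz)
    have a1: "a e1 = 0" using coord[OF k(1)] lc0 k(1) e1k e2k sk1 by simp
    have a2: "a e2 = 0" using coord[OF k(2)] lc0 k(2) e1k e2k sk2 by simp
    have lcS: "lincomb a S = 0\<^sub>v n"
    proof (rule eq_vecI)
      show "dim_vec (lincomb a S) = dim_vec (0\<^sub>v n)" using lincomb_dim[OF finS Sc] by simp
      fix i assume "i < dim_vec (0\<^sub>v n)"
      then have i: "i < n" by simp
      show "lincomb a S $ i = 0\<^sub>v n $ i"
        using coord[OF i] lc0 i a1 a2 lincomb_index[OF i Sc] by simp
    qed
    have wS: "w \<in> S" using a(2,3) a1 a2 unfolding T_def by auto
    have "lin_dep S"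
      by (rule lin_dep_crit[OF finS subset_refl _ wS]) (use a(3) lcS in auto)
    then show False using li by simp
  qed
  have "card T \<le> dim" using li_le_dim(2)[OF fin_dim _ liT] Tc by simp
  then show ?thesis using rk cardT dim_is_n by simp
qed


lemma fox_eq:
  assumes "is_equation n E"
  shows "(\<Sum>j\<in>{1..n}. push (\<lambda>j. length (h j)) (S E j) * Fw (h j))
       = Fw (morph_app h (fst E)) - Fw (morph_app h (snd E))"
proof -
  have "(\<Sum>j\<in>{1..n}. push (\<lambda>j. length (h j)) (S E j) * Fw (h j))
     = (\<Sum>j\<in>{1..n}. push (\<lambda>j. length (h j)) (Sw (fst E) j) * Fw (h j))
       - (\<Sum>j\<in>{1..n}. push (\<lambda>j. length (h j)) (Sw (snd E) j) * Fw (h j))"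
    by (simp add: S_def push_diff left_diff_distrib sum_subtractf)
  also have "\<dots> = Fw (morph_app h (fst E)) - Fw (morph_app h (snd E))"
    using fox[of "{1..n}" "fst E" h] fox[of "{1..n}" "snd E" h] assms
    by (simp add: is_equation_def)
  finally show ?thesis .
qed

theorem lemma4p3:
  fixes n :: nat and E E' :: equation
  assumes "is_equation n E" and "is_equation n E'"
    and "strongly_independent n E E'"
  shows "\<exists>k \<in> {1..n}. \<exists>l \<in> {1..n}. t_poly E E' k l \<noteq> 0"
proof (rule ccontr)
  assume "\<not> ?thesis"
  then have t0: "\<And>k l. k \<in> {1..n} \<Longrightarrow> l \<in> {1..n} \<Longrightarrow> t_poly E E' k l = 0" by blast
  obtain r h where sol: "is_solution r h E" and rk: "sol_rank n r h = n - 1"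
    and ns: "morph_app h (fst E') \<noteq> morph_app h (snd E')"
    using assms(3) unfolding strongly_independent_def by blast
  obtain r' h' where sol': "is_solution r' h' E'"
    and ns': "morph_app h' (fst E) \<noteq> morph_app h' (snd E)"
    using assms(3) unfolding strongly_independent_def by blast
  have uv: "fst E \<noteq> snd E" using ns' by metis
  have huv: "morph_app h (fst E) = morph_app h (snd E)" using sol by (simp add: is_solution_def)
  have er: "\<forall>k1\<in>{1..n}. \<forall>k2\<in>{1..n}. h k1 = [] \<longrightarrow> h k2 = [] \<longrightarrow> k1 = k2"
  proof (intro ballI impI, rule ccontr)
    fix k1 k2 assume k: "k1 \<in> {1..n}" "k2 \<in> {1..n}" "h k1 = []" "h k2 = []" "k1 \<noteq> k2"
    have A: "count_mat n r h \<in> carrier_mat n r" by (simp add: count_mat_def)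
    have z: "count_mat n r h $$ (k1 - 1, c) = 0 \<and> count_mat n r h $$ (k2 - 1, c) = 0" if "c < r" for c
    proof -
      have e: "Suc (k1 - 1) = k1" "k1 - 1 < n" "Suc (k2 - 1) = k2" "k2 - 1 < n" using k by auto
      show ?thesis unfolding count_mat_def using e that k(3,4) by (simp add: index_mat)
    qed
    have "vec_space.rank n (count_mat n r h) + 2 \<le> n"
      by (rule vec_space.rank_two_zero_rows[OF A _ _ _ z]) (use k in auto)
    then show False using rk k unfolding sol_rank_def by auto
  qed
  let ?l = "\<lambda>j. length (h j)"
  define a where "a j = push ?l (S E j)" for j
  define b where "b j = push ?l (S E' j)" for j
  define Y where "Y j = Fw (h j)" for j
  obtain k where k: "k \<in> {1..n}" "a k \<noteq> 0"
    using NV[OF uv huv _ _ er] assms(1) unfolding a_def S_def is_equation_def by blast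
  have sa: "(\<Sum>j\<in>{1..n}. a j * Y j) = 0"
    using fox_eq[OF assms(1), of h] huv unfolding a_def Y_def by simp
  have sb: "(\<Sum>j\<in>{1..n}. b j * Y j) \<noteq> 0"
    using fox_eq[OF assms(2), of h] ns Fw_inj unfolding b_def Y_def by auto
  have ab: "a k * b l = b k * a l" if "l \<in> {1..n}" for l
  proof -
    have "push ?l (t_poly E E' k l) = 0" using t0[OF k(1) that] by simp
    then show ?thesis unfolding t_poly_def a_def b_def by (simp add: push_diff push_mult)
  qed
  have "a k * (\<Sum>j\<in>{1..n}. b j * Y j) = (\<Sum>j\<in>{1..n}. (a k * b j) * Y j)"
    by (simp add: sum_distrib_left mult.assoc)
  also have "\<dots> = (\<Sum>j\<in>{1..n}. b k * (a j * Y j))"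
    by (rule sum.cong) (simp_all add: ab mult.assoc)
  also have "\<dots> = 0" using sa by (simp add: sum_distrib_left[symmetric])
  finally show False using k(2) sb by simp
qed

end
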